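(* Let $k\ge2$ and let $G,H$ be connected graphs that are not $2$-connected. For vertices $v\in V(G_\perp)$ and $w\in V(H)\setminus V(H_\perp)$ we have $\chi^k_G(v)\ne\chi^k_H(w)$.
   Context: Graphs are finite, simple, undirected (possibly colored). A graph is $2$-connected if it has more than $2$ vertices and removing any one vertex leaves it connected. A separator of $G$ is a set $S$ with $G-S$ disconnected. $P(G)$ is the set of pairs $(S,K)$ with $S$ a separator of minimum cardinality and $K$ the vertex set of a connected component of $G-S$, partially ordered by $(S,K)\le(S',K')$ iff $K\subseteq K'$; $P_0(G)$ is the set of minimal elements; $V(G_\perp):=V(G)\setminus\bigcup_{(S,K)\in P_0(G)}K$. For $k\ge2$, the $k$-dimensional Weisfeiler–Leman algorithm computes a coloring of $V(G)^k$: the initial color of a tuple consists of its input color and the isomorphism type of the ordered induced subgraph on its entries; in each round the new color of $\bar v$ is the pair of its old color and the multiset, over $w\in V(G)$, of the $k$-tuples whose $i$-th component is the old color of $\bar v$ with its $i$-th entry replaced by $w$; the stable coloring is $\chi^k_G$, with canonical colors comparable across graphs. $\chi^k_G(v):=\chi^k_G(v,\dots,v)$. *)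

theory Defs
  imports Main "HOL-Library.Multiset"
begin

record ('a, 'c) cgraph =
  verts :: "'a set"
  adj   :: "'a \<Rightarrow> 'a \<Rightarrow> bool"
  vcol  :: "'a \<Rightarrow> 'c"

definition wf_graph :: "('a, 'c) cgraph \<Rightarrow> bool" where
  "wf_graph G \<longleftrightarrow> finite (verts G)
     \<and> (\<forall>x y. adj G x y \<longrightarrow> x \<in> verts G \<and> y \<in> verts G)
     \<and> (\<forall>x y. adj G x y \<longrightarrow> adj G y x)
     \<and> (\<forall>x. \<not> adj G x x)"

definition reach_in :: "('a, 'c) cgraph \<Rightarrow> 'a set \<Rightarrow> 'a \<Rightarrow> 'a \<Rightarrow> bool" where
  "reach_in G X x y \<longleftrightarrow> x \<in> X \<and> (\<lambda>a b. a \<in> X \<and> b \<in> X \<and> adj G a b)\<^sup>*\<^sup>* x y"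

definition connected_set :: "('a, 'c) cgraph \<Rightarrow> 'a set \<Rightarrow> bool" where
  "connected_set G X \<longleftrightarrow> X \<noteq> {} \<and> (\<forall>x\<in>X. \<forall>y\<in>X. reach_in G X x y)"

definition connected :: "('a, 'c) cgraph \<Rightarrow> bool" where
  "connected G \<longleftrightarrow> connected_set G (verts G)"

definition two_connected :: "('a, 'c) cgraph \<Rightarrow> bool" where
  "two_connected G \<longleftrightarrow> card (verts G) > 2
     \<and> (\<forall>v\<in>verts G. connected_set G (verts G - {v}))"

definition separator :: "('a, 'c) cgraph \<Rightarrow> 'a set \<Rightarrow> bool" where
  "separator G S \<longleftrightarrow> S \<subseteq> verts G
     \<and> (\<exists>x\<in>verts G - S. \<exists>y\<in>verts G - S. \<not> reach_in G (verts G - S) x y)"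

definition min_separator :: "('a, 'c) cgraph \<Rightarrow> 'a set \<Rightarrow> bool" where
  "min_separator G S \<longleftrightarrow> separator G S \<and> (\<forall>S'. separator G S' \<longrightarrow> card S \<le> card S')"

definition component_of :: "('a, 'c) cgraph \<Rightarrow> 'a set \<Rightarrow> 'a set \<Rightarrow> bool" where
  "component_of G S K \<longleftrightarrow>
     (\<exists>x\<in>verts G - S. K = {y. reach_in G (verts G - S) x y})"

definition Psep :: "('a, 'c) cgraph \<Rightarrow> ('a set \<times> 'a set) set" where
  "Psep G = {(S, K). min_separator G S \<and> component_of G S K}"

definition P0sep :: "('a, 'c) cgraph \<Rightarrow> ('a set \<times> 'a set) set" where
  "P0sep G = {(S, K) \<in> Psep G. \<not> (\<exists>(S', K') \<in> Psep G. K' \<subset> K)}"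

definition verts_bot :: "('a, 'c) cgraph \<Rightarrow> 'a set" where
  "verts_bot G = verts G - (\<Union>(S, K) \<in> P0sep G. K)"

text \<open>Canonical colours: an initial colour (input colours of the entries plus the
  isomorphism type of the ordered induced subgraph, given by the adjacency and
  equality pattern), or a refined colour (old colour, multiset of colour tuples).\<close>
datatype 'c wlcol =
    WInit "'c list" "(bool \<times> bool) list list"
  | WRef "'c wlcol" "'c wlcol list multiset"

primrec wl_round :: "('a, 'c) cgraph \<Rightarrow> nat \<Rightarrow> nat \<Rightarrow> 'a list \<Rightarrow> 'c wlcol" where
  "wl_round G k 0 t =
     WInit (map (vcol G) t)
           (map (\<lambda>i. map (\<lambda>j. (adj G (t!i) (t!j), t!i = t!j)) [0..<k]) [0..<k])"
| "wl_round G k (Suc r) t =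
     WRef (wl_round G k r t)
          (image_mset (\<lambda>w. map (\<lambda>i. wl_round G k r (t[i := w])) [0..<k]) (mset_set (verts G)))"

text \<open>The stable colouring, as a canonical object comparable across graphs: the
  sequence of colours of all rounds. Two tuples (possibly in different graphs)
  get the same stable colour iff they get the same colour in every round.\<close>
definition wl_stable :: "('a, 'c) cgraph \<Rightarrow> nat \<Rightarrow> 'a list \<Rightarrow> nat \<Rightarrow> 'c wlcol" where
  "wl_stable G k t = (\<lambda>r. wl_round G k r t)"

definition wl_vertex :: "('a, 'c) cgraph \<Rightarrow> nat \<Rightarrow> 'a \<Rightarrow> nat \<Rightarrow> 'c wlcol" where
  "wl_vertex G k v = wl_stable G k (replicate k v)"

end

theory Submission
  imports Defs "HOL-Library.FuncSet" "HOL-Library.Infinite_Set"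
begin

definition Req :: "('a,'c) cgraph \<Rightarrow> ('b,'c) cgraph \<Rightarrow> nat \<Rightarrow> 'a list \<Rightarrow> 'b list \<Rightarrow> bool" where
  "Req G H k s t \<longleftrightarrow> (\<forall>r. wl_round G k r s = wl_round H k r t)"

lemma Req_sym: "Req G H k s t \<Longrightarrow> Req H G k t s"
  by (simp add: Req_def)

lemma round_down:
  assumes "wl_round G k r' s = wl_round H k r' t" "r \<le> r'"
  shows "wl_round G k r s = wl_round H k r t"
  using assms
proof (induction r' arbitrary: r)
  case 0 thus ?case by simp
next
  case (Suc r')
  show ?case
  proof (cases "r = Suc r'")
    case True thus ?thesis using Suc by simp
  next
    case False
    hence "r \<le> r'" using Suc by simp
    moreover have "wl_round G k r' s = wl_round H k r' t" using Suc.prems(1) by simp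
    ultimately show ?thesis using Suc.IH by blast
  qed
qed

lemma Req_atomic:
  assumes "Req G H k s t" "i < k" "j < k"
  shows "adj G (s!i) (s!j) = adj H (t!i) (t!j) \<and> (s!i = s!j) = (t!i = t!j)"
proof -
  have "wl_round G k 0 s = wl_round H k 0 t" using assms(1) unfolding Req_def by blast
  hence "\<forall>x\<in>{0..<k}. \<forall>y\<in>{0..<k}. adj G (s ! x) (s ! y) = adj H (t ! x) (t ! y) \<and> (s ! x = s ! y) = (t ! x = t ! y)"
    by simp
  thus ?thesis using assms(2,3) by auto
qed

lemma mset_bij:
  assumes "finite A"
  shows "finite B \<Longrightarrow> image_mset \<phi> (mset_set A) = image_mset \<psi> (mset_set B)
    \<Longrightarrow> \<exists>f. bij_betw f A B \<and> (\<forall>z\<in>A. \<phi> z = \<psi> (f z))"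
  using assms
proof (induction A arbitrary: B rule: finite_induct)
  case empty
  hence "B = {}" by (metis image_mset_is_empty_iff mset_set.empty mset_set_empty_iff)
  thus ?case by (auto simp: bij_betw_def)
next
  case (insert a A)
  have "\<phi> a \<in># image_mset \<psi> (mset_set B)"
    using insert.prems insert.hyps by (metis image_mset_add_mset mset_set.insert union_single_eq_member)
  then obtain b where b: "b \<in> B" "\<psi> b = \<phi> a" using insert.prems by auto
  have "image_mset \<psi> (mset_set (B - {b})) = image_mset \<psi> (mset_set B) - {#\<psi> b#}"
    using b insert.prems by (simp add: mset_set_Diff image_mset_Diff)
  also have "\<dots> = image_mset \<phi> (mset_set A)"
    using insert.prems insert.hyps b by (simp, metis add_mset_remove_trivial)
  finally obtain f where f: "bij_betw f A (B - {b})" "\<forall>z\<in>A. \<phi> z = \<psi> (f z)"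
    using insert.IH[of "B - {b}"] insert.prems by auto
  define g where "g = f(a := b)"
  have "bij_betw g (insert a A) B"
  proof -
    have "bij_betw g A (B - {b})" using f(1) insert.hyps unfolding g_def
      by (metis bij_betw_cong fun_upd_other)
    hence "bij_betw g (A \<union> {a}) ((B - {b}) \<union> {g a})"
      using insert.hyps by (intro notIn_Un_bij_betw) (auto simp: g_def)
    thus ?thesis using b by (simp add: insert_absorb g_def)
  qed
  moreover have "\<forall>z\<in>insert a A. \<phi> z = \<psi> (g z)" using f insert.hyps b by (auto simp: g_def)
  ultimately show ?case by blast
qed

lemma Req_bij:
  assumes "Req G H k s t" "finite (verts G)" "finite (verts H)"
  shows "\<exists>f. bij_betw f (verts G) (verts H) \<and>
           (\<forall>z\<in>verts G. \<forall>i<k. Req G H k (s[i:=z]) (t[i:=f z]))"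
proof -
  let ?phi = "\<lambda>r z. map (\<lambda>i. wl_round G k r (s[i := z])) [0..<k]"
  let ?psi = "\<lambda>r z. map (\<lambda>i. wl_round H k r (t[i := z])) [0..<k]"
  have "\<forall>r. \<exists>f. bij_betw f (verts G) (verts H) \<and> (\<forall>z\<in>verts G. ?phi r z = ?psi r (f z))"
  proof
    fix r
    have "wl_round G k (Suc r) s = wl_round H k (Suc r) t" using assms(1) unfolding Req_def by blast
    hence "image_mset (?phi r) (mset_set (verts G)) = image_mset (?psi r) (mset_set (verts H))"
      by simp
    thus "\<exists>f. bij_betw f (verts G) (verts H) \<and> (\<forall>z\<in>verts G. ?phi r z = ?psi r (f z))"
      using mset_bij assms(2,3) by blast
  qed
  then obtain F where F: "\<And>r. bij_betw (F r) (verts G) (verts H)"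
    "\<And>r. \<forall>z\<in>verts G. ?phi r z = ?psi r (F r z)" by metis
  define h where "h r = restrict (F r) (verts G)" for r
  have hin: "h r \<in> (\<Pi>\<^sub>E z\<in>verts G. verts H)" for r
    using F(1)[of r] unfolding h_def bij_betw_def by auto
  have "finite (h ` UNIV)"
    by (rule finite_subset[OF _ finite_PiE[OF assms(2), of "\<lambda>_. verts H"]]) (use hin assms(3) in auto)
  then obtain y where y: "y \<in> h ` UNIV" "infinite (h -` {y})"
    using inf_img_fin_dom[of h UNIV] by auto
  then obtain r0 where r0: "y = h r0" by auto
  have bij: "bij_betw y (verts G) (verts H)"
    using F(1)[of r0] unfolding r0 h_def by (rule bij_betw_cong[THEN iffD1, rotated]) auto
  have "\<forall>z\<in>verts G. \<forall>i<k. Req G H k (s[i:=z]) (t[i:=y z])"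
  proof (intro ballI allI impI)
    fix z i assume z: "z \<in> verts G" and i: "i < k"
    show "Req G H k (s[i:=z]) (t[i:=y z])" unfolding Req_def
    proof
      fix r
      obtain r' where r': "r' \<ge> r" "h r' = y" using y(2) unfolding infinite_nat_iff_unbounded_le by auto
      have "y z = F r' z" using r' z unfolding h_def by auto
      hence "?phi r' z = ?psi r' (y z)" using F(2)[of r'] z by auto
      hence "\<forall>x\<in>{0..<k}. wl_round G k r' (s[x := z]) = wl_round H k r' (t[x := y z])" by simp
      hence "wl_round G k r' (s[i:=z]) = wl_round H k r' (t[i:=y z])"
        using i by simp
      thus "wl_round G k r (s[i:=z]) = wl_round H k r (t[i:=y z])"
        using round_down r'(1) by blast
    qed
  qed
  thus ?thesis using bij by blast
qed

lemma Req_dup: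
  assumes R: "Req G H k s t" and fin: "finite (verts G)" "finite (verts H)"
    and ss: "set s \<subseteq> verts G" and len: "length s = k" "length t = k"
    and ij: "i < k" "j < k"
  shows "Req G H k (s[j:=s!i]) (t[j:=t!i])"
proof (cases "i = j")
  case True thus ?thesis using R by simp
next
  case False
  obtain f where f: "\<forall>z\<in>verts G. \<forall>i<k. Req G H k (s[i:=z]) (t[i:=f z])"
    using Req_bij[OF R fin] by blast
  have si: "s!i \<in> verts G" using ss ij len by auto
  have R2: "Req G H k (s[j:=s!i]) (t[j:=f (s!i)])" using f si ij by blast
  have "(s[j:=s!i]!i = s[j:=s!i]!j) = (t[j:=f (s!i)]!i = t[j:=f (s!i)]!j)"
    using Req_atomic[OF R2 ij] by blast
  hence "t!i = f (s!i)" using False len ij by simp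
  thus ?thesis using R2 by simp
qed

primrec wcnt :: "('a,'c) cgraph \<Rightarrow> nat \<Rightarrow> 'a \<Rightarrow> 'a \<Rightarrow> nat" where
  "wcnt G 0 x y = (if x = y then 1 else 0)"
| "wcnt G (Suc l) x y = (\<Sum>z\<in>verts G. if adj G x z then wcnt G l z y else 0)"

lemma wcnt_inv:
  assumes "Req G H k s t" "finite (verts G)" "finite (verts H)" "k \<ge> 2"
    "length s = k" "length t = k"
  shows "wcnt G l (s!0) (s!1) = wcnt H l (t!0) (t!1)"
  using assms
proof (induction l arbitrary: s t)
  case 0
  thus ?case using Req_atomic[OF 0(1), of 0 1] by simp
next
  case (Suc l)
  obtain f where bij: "bij_betw f (verts G) (verts H)" and
    f: "\<forall>z\<in>verts G. \<forall>i<k. Req G H k (s[i:=z]) (t[i:=f z])"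
    using Req_bij[OF Suc.prems(1-3)] by blast
  have "wcnt H (Suc l) (t!0) (t!1) = (\<Sum>z\<in>verts G. if adj H (t!0) (f z) then wcnt H l (f z) (t!1) else 0)"
    using sum.reindex_bij_betw[OF bij, of "\<lambda>z. if adj H (t!0) z then wcnt H l z (t!1) else 0"] by (simp del: One_nat_def)
  also have "\<dots> = (\<Sum>z\<in>verts G. if adj G (s!0) z then wcnt G l z (s!1) else 0)"
  proof (rule sum.cong[OF refl])
    fix z assume z: "z \<in> verts G"
    have R1: "Req G H k (s[1:=z]) (t[1:=f z])" using f z Suc.prems by auto
    have "adj G (s[1:=z]!0) (s[1:=z]!1) = adj H (t[1:=f z]!0) (t[1:=f z]!1)"
      using Req_atomic[OF R1, of 0 1] Suc.prems by auto
    hence a: "adj G (s!0) z = adj H (t!0) (f z)" using Suc.prems by simp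
    have R0: "Req G H k (s[0:=z]) (t[0:=f z])" using f z Suc.prems by auto
    have "wcnt G l (s[0:=z]!0) (s[0:=z]!1) = wcnt H l (t[0:=f z]!0) (t[0:=f z]!1)"
      using Suc.IH[OF R0] Suc.prems by auto
    hence "wcnt G l z (s!1) = wcnt H l (f z) (t!1)" using Suc.prems by simp
    thus "(if adj H (t!0) (f z) then wcnt H l (f z) (t!1) else 0) = (if adj G (s!0) z then wcnt G l z (s!1) else 0)"
      using a by simp
  qed
  finally show ?case by (simp del: One_nat_def)
qed

lemma if_sum0: "(if P then sum f A else (0::nat)) = (\<Sum>u\<in>A. if P then f u else 0)"
  by simp

lemma wcnt_right:
  assumes wf: "wf_graph G"
  shows "wcnt G (Suc l) x y = (\<Sum>z\<in>verts G. if adj G z y then wcnt G l x z else 0)"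
proof (induction l arbitrary: x)
  case 0
  have "(\<Sum>z\<in>verts G. if adj G x z then wcnt G 0 z y else 0)
      = (\<Sum>z\<in>verts G. if z = y then (if adj G x y then 1 else 0) else 0)"
    by (rule sum.cong) auto
  also have "\<dots> = (if adj G x y then 1 else 0)"
    using wf unfolding wf_graph_def by (auto simp: sum.delta)
  also have "\<dots> = (\<Sum>z\<in>verts G. if z = x then (if adj G x y then 1 else 0) else 0)"
    using wf unfolding wf_graph_def by (auto simp: sum.delta)
  also have "\<dots> = (\<Sum>z\<in>verts G. if adj G z y then wcnt G 0 x z else 0)"
    by (rule sum.cong) auto
  finally show ?case by simp
next
  case (Suc l)
  have "wcnt G (Suc (Suc l)) x y
     = (\<Sum>z\<in>verts G. \<Sum>u\<in>verts G. if adj G x z then (if adj G u y then wcnt G l z u else 0) else 0)"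
    by (simp only: wcnt.simps(2)[of G "Suc l"] Suc.IH if_sum0)
  also have "\<dots> = (\<Sum>u\<in>verts G. \<Sum>z\<in>verts G. if adj G u y then (if adj G x z then wcnt G l z u else 0) else 0)"
    by (subst sum.swap) (rule sum.cong[OF refl], rule sum.cong[OF refl], auto)
  also have "\<dots> = (\<Sum>u\<in>verts G. if adj G u y then wcnt G (Suc l) x u else 0)"
    by (simp only: wcnt.simps(2) if_sum0)
  finally show ?case .
qed

lemma wcnt_sym:
  assumes wf: "wf_graph G"
  shows "wcnt G l x y = wcnt G l y x"
proof (induction l arbitrary: x y)
  case 0 thus ?case by auto
next
  case (Suc l)
  have "wcnt G (Suc l) x y = (\<Sum>z\<in>verts G. if adj G z y then wcnt G l x z else 0)"
    using wcnt_right[OF wf] by blast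
  also have "\<dots> = (\<Sum>z\<in>verts G. if adj G y z then wcnt G l z x else 0)"
    using wf Suc.IH unfolding wf_graph_def by (intro sum.cong) auto
  finally show ?case by simp
qed

primrec avw :: "('a,'c) cgraph \<Rightarrow> 'a \<Rightarrow> nat \<Rightarrow> 'a \<Rightarrow> 'a \<Rightarrow> nat" where
  "avw G b 0 x y = (if x = y \<and> x \<noteq> b then 1 else 0)"
| "avw G b (Suc l) x y = (if x = b then 0 else (\<Sum>z\<in>verts G. if adj G x z then avw G b l z y else 0))"

primrec fp :: "('a,'c) cgraph \<Rightarrow> 'a \<Rightarrow> nat \<Rightarrow> 'a \<Rightarrow> nat" where
  "fp G b 0 x = (if x = b then 1 else 0)"
| "fp G b (Suc l) x = (if x = b then 0 else (\<Sum>z\<in>verts G. if adj G x z then fp G b l z else 0))"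

lemma decomp:
  "wcnt G l x y = avw G b l x y + (\<Sum>i\<le>l. fp G b i x * wcnt G (l - i) b y)"
proof (induction l arbitrary: x)
  case 0 thus ?case by auto
next
  case (Suc l)
  show ?case
  proof (cases "x = b")
    case True
    have "(\<Sum>i\<le>Suc l. fp G b i x * wcnt G (Suc l - i) b y)
        = fp G b 0 x * wcnt G (Suc l - 0) b y + (\<Sum>i\<le>l. fp G b (Suc i) x * wcnt G (Suc l - Suc i) b y)"
      by (rule sum.atMost_Suc_shift)
    also have "\<dots> = wcnt G (Suc l) b y" using True by simp
    finally show ?thesis using True by simp
  next
    case False
    have "wcnt G (Suc l) x y = (\<Sum>z\<in>verts G. if adj G x z then avw G b l z y + (\<Sum>i\<le>l. fp G b i z * wcnt G (l - i) b y) else 0)"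
      unfolding wcnt.simps(2)
    proof (rule sum.cong[OF refl])
      fix z show "(if adj G x z then wcnt G l z y else 0) = (if adj G x z then avw G b l z y + (\<Sum>i\<le>l. fp G b i z * wcnt G (l - i) b y) else 0)"
        using Suc.IH[of z] by simp
    qed
    also have "\<dots> = (\<Sum>z\<in>verts G. if adj G x z then avw G b l z y else 0)
       + (\<Sum>z\<in>verts G. \<Sum>i\<le>l. if adj G x z then fp G b i z * wcnt G (l - i) b y else 0)"
      by (simp add: sum.distrib[symmetric] if_sum0[symmetric]) (rule sum.cong, auto)
    also have "(\<Sum>z\<in>verts G. \<Sum>i\<le>l. if adj G x z then fp G b i z * wcnt G (l - i) b y else 0)
       = (\<Sum>i\<le>l. (\<Sum>z\<in>verts G. if adj G x z then fp G b i z else 0) * wcnt G (l - i) b y)"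
      by (subst sum.swap) (simp add: sum_distrib_right, intro sum.cong refl, simp)
    also have "\<dots> = (\<Sum>i\<le>l. fp G b (Suc i) x * wcnt G (Suc l - Suc i) b y)"
      using False by simp
    also have "\<dots> = (\<Sum>i\<le>Suc l. fp G b i x * wcnt G (Suc l - i) b y)"
      using False by (subst sum.atMost_Suc_shift) simp
    finally show ?thesis using False by simp
  qed
qed

lemma avw_end: "avw G b l x b = 0"
proof (induction l arbitrary: x)
  case 0 thus ?case by simp
next
  case (Suc l)
  have "\<forall>z. (if adj G x z then avw G b l z b else 0) = 0" using Suc.IH by simp
  thus ?case by simp
qed

lemma fp_rec: "wcnt G l x b = fp G b l x + (\<Sum>i<l. fp G b i x * wcnt G (l - i) b b)"
proof -
  have "wcnt G l x b = (\<Sum>i\<le>l. fp G b i x * wcnt G (l - i) b b)"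
    using decomp[of G l x b b] avw_end by simp
  also have "\<dots> = (\<Sum>i<l. fp G b i x * wcnt G (l - i) b b) + fp G b l x * wcnt G (l - l) b b"
    by (simp add: lessThan_Suc_atMost[symmetric])
  finally show ?thesis by simp
qed

lemma fp_det:
  assumes "\<forall>m. wcnt G m x b = wcnt H m x' b'" "\<forall>m. wcnt G m b b = wcnt H m b' b'"
  shows "fp G b l x = fp H b' l x'"
proof (induction l rule: less_induct)
  case (less l)
  have "(\<Sum>i<l. fp G b i x * wcnt G (l - i) b b) = (\<Sum>i<l. fp H b' i x' * wcnt H (l - i) b' b')"
    using less assms(2) by (intro sum.cong) auto
  thus ?case using fp_rec[of G l x b] fp_rec[of H l x' b'] assms(1) by simp
qed

lemma avw_det:
  assumes "\<forall>m. wcnt G m x b = wcnt H m x' b'" "\<forall>m. wcnt G m b b = wcnt H m b' b'"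
    "\<forall>m. wcnt G m x y = wcnt H m x' y'" "\<forall>m. wcnt G m b y = wcnt H m b' y'"
  shows "avw G b l x y = avw H b' l x' y'"
proof -
  have "(\<Sum>i\<le>l. fp G b i x * wcnt G (l - i) b y) = (\<Sum>i\<le>l. fp H b' i x' * wcnt H (l - i) b' y')"
    using fp_det[OF assms(1,2)] assms(4) by (intro sum.cong) auto
  thus ?thesis using decomp[of G l x y b] decomp[of H l x' y' b'] assms(3) by simp
qed

lemma reach_refl: "x \<in> X \<Longrightarrow> reach_in G X x x"
  by (simp add: reach_in_def)

lemma reach_mem:
  assumes "reach_in G X x y" shows "y \<in> X"
proof -
  have x: "x \<in> X" and r: "(\<lambda>a b. a \<in> X \<and> b \<in> X \<and> adj G a b)\<^sup>*\<^sup>* x y"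
    using assms unfolding reach_in_def by blast+
  from r show ?thesis by (induction rule: rtranclp_induct) (use x in auto)
qed

lemma reach_trans: "reach_in G X x y \<Longrightarrow> reach_in G X y z \<Longrightarrow> reach_in G X x z"
  unfolding reach_in_def by auto

lemma reach_step: "reach_in G X x y \<Longrightarrow> adj G y z \<Longrightarrow> z \<in> X \<Longrightarrow> reach_in G X x z"
  using reach_mem[of G X x y] unfolding reach_in_def
  by (auto intro: rtranclp.rtrancl_into_rtrancl)

lemma reach_sym:
  assumes wf: "wf_graph G" and r: "reach_in G X x y"
  shows "reach_in G X y x"
proof -
  let ?r = "\<lambda>a b. a \<in> X \<and> b \<in> X \<and> adj G a b"
  have "?r\<^sup>*\<^sup>* x y" using r unfolding reach_in_def by blast
  hence "?r\<^sup>*\<^sup>* y x"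
  proof (induction rule: rtranclp_induct)
    case base thus ?case by simp
  next
    case (step y z)
    hence "?r z y" using wf unfolding wf_graph_def by blast
    thus ?case using step converse_rtranclp_into_rtranclp[of ?r z y x] by blast
  qed
  thus ?thesis using reach_mem[OF r] unfolding reach_in_def by blast
qed

lemma reach_restrict:
  assumes r: "reach_in G X a z" and h: "\<And>y. reach_in G X a y \<Longrightarrow> y \<in> Y"
  shows "reach_in G Y a z"
proof -
  let ?r = "\<lambda>a b. a \<in> X \<and> b \<in> X \<and> adj G a b"
  have a: "a \<in> X" "?r\<^sup>*\<^sup>* a z" using r unfolding reach_in_def by blast+
  have "reach_in G X a z \<and> reach_in G Y a z" using a(2)
  proof (induction rule: rtranclp_induct)
    case base thus ?case using a(1) h reach_refl by metis
  next
    case (step y z)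
    hence "reach_in G X a z" using reach_step by metis
    thus ?case using step h reach_step by metis
  qed
  thus ?thesis by blast
qed

lemma avw_reach:
  assumes wf: "wf_graph G" and x: "x \<in> verts G"
  shows "reach_in G (verts G - {b}) x y \<longleftrightarrow> (\<exists>l. avw G b l x y > 0)"
proof
  let ?X = "verts G - {b}"
  let ?r = "\<lambda>a c. a \<in> ?X \<and> c \<in> ?X \<and> adj G a c"
  have fin: "finite (verts G)" using wf unfolding wf_graph_def by blast
  assume "reach_in G ?X x y"
  hence "?r\<^sup>*\<^sup>* x y" "x \<in> ?X" unfolding reach_in_def by blast+
  thus "\<exists>l. avw G b l x y > 0"
  proof (induction rule: converse_rtranclp_induct)
    case base thus ?case by (intro exI[of _ 0]) simp
  next
    case (step u z)
    then obtain l where l: "avw G b l z y > 0" by blast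
    have "avw G b l z y \<le> (\<Sum>z'\<in>verts G. if adj G u z' then avw G b l z' y else 0)"
      using member_le_sum[of z "verts G" "\<lambda>z'. if adj G u z' then avw G b l z' y else 0"] step fin
      by auto
    hence "avw G b (Suc l) u y > 0" using l step by simp
    thus ?case by blast
  qed
next
  have fin: "finite (verts G)" using wf unfolding wf_graph_def by blast
  assume "\<exists>l. avw G b l x y > 0"
  then obtain l where "avw G b l x y > 0" by blast
  thus "reach_in G (verts G - {b}) x y" using x
  proof (induction l arbitrary: x)
    case 0 thus ?case by (auto intro: reach_refl split: if_splits)
  next
    case (Suc l)
    hence xb: "x \<noteq> b" by (auto split: if_splits)
    have pos: "(\<Sum>z\<in>verts G. if adj G x z then avw G b l z y else 0) > 0" using Suc xb by simp
    have "\<exists>z\<in>verts G. (if adj G x z then avw G b l z y else 0) \<noteq> 0"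
    proof (rule ccontr)
      assume "\<not> ?thesis"
      hence "(\<Sum>z\<in>verts G. if adj G x z then avw G b l z y else 0) = 0" by (intro sum.neutral) blast
      thus False using pos by simp
    qed
    then obtain z where z: "z \<in> verts G" "adj G x z" "avw G b l z y > 0"
      by (auto split: if_splits)
    have rz: "reach_in G (verts G - {b}) z y" using Suc.IH z by blast
    hence "z \<noteq> b" unfolding reach_in_def by blast
    hence "reach_in G (verts G - {b}) x z"
      using reach_step[OF reach_refl[of x "verts G - {b}" G], of z] z xb Suc.prems by auto
    thus ?case using reach_trans rz by metis
  qed
qed

definition good :: "('a,'c) cgraph \<Rightarrow> nat \<Rightarrow> 'a list \<Rightarrow> bool" where
  "good G k s \<longleftrightarrow> length s = k \<and> set s \<subseteq> verts G"

lemma good_upd: "good G k s \<Longrightarrow> z \<in> verts G \<Longrightarrow> good G k (s[i:=z])"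
  unfolding good_def using set_update_subset_insert by fastforce

lemma good_nth: "good G k s \<Longrightarrow> i < k \<Longrightarrow> s!i \<in> verts G"
  unfolding good_def by (metis nth_mem subsetD)

lemma Comp:
  assumes wf: "wf_graph G" "wf_graph H" and k: "k \<ge> 2"
    and gs: "good G k s" and gt: "good H k t" and R: "Req G H k s t"
  shows "\<exists>f. bij_betw f (verts G) (verts H) \<and> (\<forall>y\<in>verts G.
     Req G H k (s[1:=y]) (t[1:=f y]) \<and> Req G H k (s[0:=y]) (t[0:=f y]) \<and>
     (reach_in G (verts G - {s!1}) (s!0) y \<longleftrightarrow> reach_in H (verts H - {t!1}) (t!0) (f y)))"
proof -
  have fin: "finite (verts G)" "finite (verts H)" using wf unfolding wf_graph_def by blast+
  have len: "length s = k" "length t = k" using gs gt unfolding good_def by blast+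
  obtain f where bij: "bij_betw f (verts G) (verts H)" and
    f: "\<forall>z\<in>verts G. \<forall>i<k. Req G H k (s[i:=z]) (t[i:=f z])"
    using Req_bij[OF R fin] by blast
  have x0: "s!0 \<in> verts G" using good_nth[OF gs, of 0] k by simp
  have wxb: "\<forall>m. wcnt G m (s!0) (s!1) = wcnt H m (t!0) (t!1)"
    using wcnt_inv[OF R fin k len] by blast
  have Rd: "Req G H k (s[0:=s!1]) (t[0:=t!1])"
    using Req_dup[OF R fin, of 1 0] gs len k unfolding good_def by auto
  have "\<forall>m. wcnt G m (s[0:=s!1]!0) (s[0:=s!1]!1) = wcnt H m (t[0:=t!1]!0) (t[0:=t!1]!1)"
    using wcnt_inv[OF Rd fin k] len by simp
  hence wbb: "\<forall>m. wcnt G m (s!1) (s!1) = wcnt H m (t!1) (t!1)" using len k by simp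
  have "\<forall>y\<in>verts G. reach_in G (verts G - {s!1}) (s!0) y \<longleftrightarrow> reach_in H (verts H - {t!1}) (t!0) (f y)"
  proof
    fix y assume y: "y \<in> verts G"
    have R1: "Req G H k (s[1:=y]) (t[1:=f y])" using f y k by auto
    have "\<forall>m. wcnt G m (s[1:=y]!0) (s[1:=y]!1) = wcnt H m (t[1:=f y]!0) (t[1:=f y]!1)"
      using wcnt_inv[OF R1 fin k] len by simp
    hence wxy: "\<forall>m. wcnt G m (s!0) y = wcnt H m (t!0) (f y)" using len k by simp
    have R0: "Req G H k (s[0:=y]) (t[0:=f y])" using f y k by auto
    have "\<forall>m. wcnt G m (s[0:=y]!0) (s[0:=y]!1) = wcnt H m (t[0:=f y]!0) (t[0:=f y]!1)"
      using wcnt_inv[OF R0 fin k] len by simp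
    hence "\<forall>m. wcnt G m y (s!1) = wcnt H m (f y) (t!1)" using len k by simp
    hence wby: "\<forall>m. wcnt G m (s!1) y = wcnt H m (t!1) (f y)"
      using wcnt_sym[OF wf(1)] wcnt_sym[OF wf(2)] by metis
    have x0': "t!0 \<in> verts H" using good_nth[OF gt, of 0] k by simp
    have "\<forall>l. avw G (s!1) l (s!0) y = avw H (t!1) l (t!0) (f y)"
      using avw_det[OF wxb wbb wxy wby] by blast
    thus "reach_in G (verts G - {s!1}) (s!0) y \<longleftrightarrow> reach_in H (verts H - {t!1}) (t!0) (f y)"
      using avw_reach[OF wf(1) x0] avw_reach[OF wf(2) x0'] by simp
  qed
  thus ?thesis using bij f k by auto
qed


lemma cut_transfer:
  assumes wf: "wf_graph G" "wf_graph H" and k: "k \<ge> 2"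
    and gs: "good G k s" and gt: "good H k t" and R: "Req G H k s t"
    and sep: "separator G {s!1}"
  shows "separator H {t!1}"
proof -
  have fin: "finite (verts G)" "finite (verts H)" using wf unfolding wf_graph_def by blast+
  have len: "length s = k" "length t = k" using gs gt unfolding good_def by blast+
  obtain x y where xy: "x \<in> verts G - {s!1}" "y \<in> verts G - {s!1}"
    "\<not> reach_in G (verts G - {s!1}) x y"
    using sep unfolding separator_def by blast
  obtain g where gb: "bij_betw g (verts G) (verts H)" and
    g: "\<forall>z\<in>verts G. \<forall>i<k. Req G H k (s[i:=z]) (t[i:=g z])"
    using Req_bij[OF R fin] by blast
  have x1: "x \<in> verts G" "x \<noteq> s!1" using xy(1) by auto
  have y1: "y \<in> verts G" "y \<noteq> s!1" using xy(2) by auto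
  have R0: "Req G H k (s[0:=x]) (t[0:=g x])" using g x1 k by auto
  have "((s[0:=x])!0 = (s[0:=x])!1) = ((t[0:=g x])!0 = (t[0:=g x])!1)"
    using Req_atomic[OF R0, of 0 1] k by auto
  moreover have "(s[0:=x])!0 = x" "(s[0:=x])!1 = s!1" "(t[0:=g x])!0 = g x" "(t[0:=g x])!1 = t!1"
    using len k by auto
  ultimately have gx: "g x \<noteq> t!1" using x1 by simp
  have gxV: "g x \<in> verts H" using bij_betw_apply[OF gb] x1 by blast
  have gs0: "good G k (s[0:=x])" by (rule good_upd[OF gs x1(1)])
  have gt0: "good H k (t[0:=g x])" by (rule good_upd[OF gt gxV])
  obtain f where fb: "bij_betw f (verts G) (verts H)" and
    f: "\<forall>y\<in>verts G. Req G H k ((s[0:=x])[1:=y]) ((t[0:=g x])[1:=f y]) \<and> Req G H k ((s[0:=x])[0:=y]) ((t[0:=g x])[0:=f y]) \<and>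
     (reach_in G (verts G - {(s[0:=x])!1}) ((s[0:=x])!0) y \<longleftrightarrow> reach_in H (verts H - {(t[0:=g x])!1}) ((t[0:=g x])!0) (f y))"
    using Comp[OF wf k gs0 gt0 R0] by blast
  have yV: "y \<in> verts G" using y1 by blast
  have fy1: "Req G H k ((s[0:=x])[0:=y]) ((t[0:=g x])[0:=f y])" using f yV by blast
  have R1: "Req G H k (s[0:=y]) (t[0:=f y])" using fy1 by simp
  have "(s[0:=y]!0 = s[0:=y]!1) = (t[0:=f y]!0 = t[0:=f y]!1)"
    using Req_atomic[OF R1, of 0 1] k by auto
  moreover have "(s[0:=y])!0 = y" "(s[0:=y])!1 = s!1" "(t[0:=f y])!0 = f y" "(t[0:=f y])!1 = t!1"
    using len k by auto
  ultimately have fy: "f y \<noteq> t!1" using y1 by simp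
  have fyV: "f y \<in> verts H" using bij_betw_apply[OF fb] yV by blast
  have e: "reach_in G (verts G - {(s[0:=x])!1}) ((s[0:=x])!0) y \<longleftrightarrow> reach_in H (verts H - {(t[0:=g x])!1}) ((t[0:=g x])!0) (f y)"
    using f yV by blast
  have "\<not> reach_in H (verts H - {t!1}) (g x) (f y)"
    using e xy(3) \<open>(s[0:=x])!0 = x\<close> \<open>(s[0:=x])!1 = s!1\<close> \<open>(t[0:=g x])!0 = g x\<close> \<open>(t[0:=g x])!1 = t!1\<close> by simp
  moreover have "t!1 \<in> verts H" using good_nth[OF gt, of 1] k by simp
  ultimately show ?thesis unfolding separator_def using gx gxV fy fyV by blast
qed

lemma sep_nonempty:
  assumes "connected G" "separator G S" shows "S \<noteq> {}"
  using assms unfolding connected_def connected_set_def separator_def by auto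

lemma single_min:
  assumes wf: "wf_graph G" and con: "connected G" and sep: "separator G {d}"
  shows "min_separator G {d}"
proof -
  have fin: "finite (verts G)" using wf unfolding wf_graph_def by blast
  have "card {d} \<le> card S'" if "separator G S'" for S'
  proof -
    have "S' \<noteq> {}" using sep_nonempty[OF con that] .
    moreover have "finite S'" using that fin unfolding separator_def by (blast intro: finite_subset)
    ultimately show ?thesis by (simp add: Suc_leI card_gt_0_iff)
  qed
  thus ?thesis using sep unfolding min_separator_def by blast
qed

lemma min_sep_single:
  assumes wf: "wf_graph G" and con: "connected G" and ms: "min_separator G S" and sep: "separator G {d}"
  shows "\<exists>c. S = {c}"
proof -
  have fin: "finite (verts G)" using wf unfolding wf_graph_def by blast
  have "card S \<le> 1" using ms sep unfolding min_separator_def by force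
  moreover have "S \<noteq> {}" using sep_nonempty[OF con] ms unfolding min_separator_def by blast
  moreover have "finite S" using ms fin unfolding min_separator_def separator_def by (blast intro: finite_subset)
  ultimately show ?thesis by (metis card_0_eq card_1_singletonE le_antisym less_one not_le_imp_less)
qed

lemma exit_lemma:
  assumes r: "reach_in G X x z" and x: "x \<in> X - {d}"
  shows "reach_in G (X - {d}) x z \<or> (\<exists>u. reach_in G (X - {d}) x u \<and> adj G u d)"
proof -
  have "(\<lambda>a b. a \<in> X \<and> b \<in> X \<and> adj G a b)\<^sup>*\<^sup>* x z" using r unfolding reach_in_def by blast
  thus ?thesis
  proof (induction rule: rtranclp_induct)
    case base thus ?case using x reach_refl by metis
  next
    case (step y z)
    show ?case
    proof (cases "reach_in G (X - {d}) x y")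
      case True
      show ?thesis
      proof (cases "z = d")
        case True thus ?thesis using \<open>reach_in G (X - {d}) x y\<close> step by blast
      next
        case False
        hence "reach_in G (X - {d}) x z" using reach_step[OF True] step by blast
        thus ?thesis by blast
      qed
    next
      case False thus ?thesis using step by blast
    qed
  qed
qed

lemma H_nocut:
  assumes wf: "wf_graph H" and con: "connected H"
    and P0: "({c}, K) \<in> P0sep H" and Kdef: "K = {y. reach_in H (verts H - {c}) w y}"
    and sepc: "separator H {c}"
    and dK: "d \<in> K" and sepd: "separator H {d}"
  shows False
proof -
  let ?V = "verts H"
  have cV: "c \<in> ?V" using sepc unfolding separator_def by blast
  have rwd: "reach_in H (?V - {c}) w d" using dK Kdef by blast
  have dc: "d \<noteq> c" using reach_mem[OF rwd] by blast
  obtain x y where xy: "x \<in> ?V - {d}" "y \<in> ?V - {d}" "\<not> reach_in H (?V - {d}) x y"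
    using sepd unfolding separator_def by blast
  have cd: "c \<in> ?V - {d}" using cV dc by blast
  obtain x0 where x0: "x0 \<in> ?V - {d}" "\<not> reach_in H (?V - {d}) x0 c"
  proof (cases "reach_in H (?V - {d}) x c")
    case True
    have "\<not> reach_in H (?V - {d}) y c"
    proof
      assume "reach_in H (?V - {d}) y c"
      hence "reach_in H (?V - {d}) c y" by (rule reach_sym[OF wf])
      hence "reach_in H (?V - {d}) x y" by (rule reach_trans[OF True])
      thus False using xy(3) by blast
    qed
    thus ?thesis using that xy(2) by blast
  next
    case False thus ?thesis using that xy(1) by blast
  qed
  define L where "L = {z. reach_in H (?V - {d}) x0 z}"
  have dV: "d \<in> ?V" using sepd unfolding separator_def by blast
  have x0V: "x0 \<in> ?V" using x0(1) by blast
  have "reach_in H ?V x0 d" using con x0V dV unfolding connected_def connected_set_def by blast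
  hence "reach_in H (?V - {d}) x0 d \<or> (\<exists>u. reach_in H (?V - {d}) x0 u \<and> adj H u d)"
    by (rule exit_lemma[OF _ x0(1)])
  moreover have "\<not> reach_in H (?V - {d}) x0 d" using reach_mem[of H "?V - {d}" x0 d] by blast
  ultimately obtain u where u: "reach_in H (?V - {d}) x0 u" "adj H u d" by blast
  have uc: "u \<noteq> c" using u(1) x0(2) by blast
  have uV: "u \<in> ?V" using u(2) wf unfolding wf_graph_def by blast
  have "adj H d u" using u(2) wf unfolding wf_graph_def by blast
  hence rwu: "reach_in H (?V - {c}) w u" using reach_step[OF rwd] uV uc by blast
  have ux0: "reach_in H (?V - {d}) u x0" by (rule reach_sym[OF wf u(1)])
  have LK: "L \<subseteq> K"
  proof
    fix z assume "z \<in> L"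
    hence "reach_in H (?V - {d}) x0 z" unfolding L_def by blast
    hence ruz: "reach_in H (?V - {d}) u z" by (rule reach_trans[OF ux0])
    have "reach_in H (?V - {c}) u z"
    proof (rule reach_restrict[OF ruz])
      fix z' assume z': "reach_in H (?V - {d}) u z'"
      have "z' \<in> ?V - {d}" by (rule reach_mem[OF z'])
      moreover have "reach_in H (?V - {d}) x0 z'" by (rule reach_trans[OF u(1) z'])
      ultimately show "z' \<in> ?V - {c}" using x0(2) by blast
    qed
    hence "reach_in H (?V - {c}) w z" by (rule reach_trans[OF rwu])
    thus "z \<in> K" using Kdef by blast
  qed
  have "d \<notin> L" unfolding L_def using reach_mem[of H "?V - {d}" x0 d] by blast
  hence LsK: "L \<subset> K" using LK dK by blast
  have ms: "min_separator H {d}" by (rule single_min[OF wf con sepd])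
  have "({d}, L) \<in> Psep H"
    unfolding Psep_def component_of_def L_def using ms x0(1) by blast
  thus False using P0 LsK unfolding P0sep_def by blast
qed

lemma G_side:
  assumes wf: "wf_graph G" and con: "connected G"
    and sepc: "separator G {c}" and v: "v \<in> verts G - {c}" and vb: "v \<in> verts_bot G"
  shows "\<exists>d. reach_in G (verts G - {c}) v d \<and> separator G {d}"
proof (rule ccontr)
  assume nd: "\<not> ?thesis"
  let ?V = "verts G"
  define K' where "K' = {y. reach_in G (?V - {c}) v y}"
  have ms: "min_separator G {c}" by (rule single_min[OF wf con sepc])
  have inP: "({c}, K') \<in> Psep G"
    unfolding Psep_def component_of_def K'_def using ms v by blast
  have "v \<in> K'" unfolding K'_def using v reach_refl[of v "verts G - {c}" G] by simp
  hence "({c}, K') \<notin> P0sep G" using vb unfolding verts_bot_def by blast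
  then obtain S'' K'' where SK: "(S'', K'') \<in> Psep G" "K'' \<subset> K'"
    using inP unfolding P0sep_def by blast
  have ms'': "min_separator G S''" using SK(1) unfolding Psep_def by blast
  obtain d where d: "S'' = {d}" using min_sep_single[OF wf con ms'' sepc] by blast
  have sepd: "separator G {d}" using ms'' d unfolding min_separator_def by blast
  have nrd: "\<not> reach_in G (?V - {c}) v d" using nd sepd by blast
  have "component_of G {d} K''" using SK(1) d unfolding Psep_def by blast
  then obtain x where x: "x \<in> ?V - {d}" "K'' = {y. reach_in G (?V - {d}) x y}"
    unfolding component_of_def by blast
  have "x \<in> K''" using x(2) reach_refl[OF x(1), of G] by simp
  hence rvx: "reach_in G (?V - {c}) v x" using SK(2) unfolding K'_def by blast
  have restr: "reach_in G (?V - {d}) v y" if "reach_in G (?V - {c}) v y" for y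
  proof (rule reach_restrict[OF that])
    fix z assume z: "reach_in G (?V - {c}) v z"
    have "z \<in> ?V - {c}" by (rule reach_mem[OF z])
    moreover have "z \<noteq> d" using z nrd by auto
    ultimately show "z \<in> ?V - {d}" by blast
  qed
  have xv: "reach_in G (?V - {d}) x v" by (rule reach_sym[OF wf restr[OF rvx]])
  have "K' \<subseteq> K''"
  proof
    fix y assume "y \<in> K'"
    hence "reach_in G (?V - {d}) v y" using restr unfolding K'_def by blast
    hence "reach_in G (?V - {d}) x y" by (rule reach_trans[OF xv])
    thus "y \<in> K''" using x(2) by blast
  qed
  thus False using SK(2) by blast
qed

lemma H_side:
  assumes wf: "wf_graph H" and con: "connected H" and n2: "\<not> two_connected H"
    and w: "w \<in> verts H - verts_bot H"
  shows "\<exists>c K. ({c}, K) \<in> P0sep H \<and> K = {y. reach_in H (verts H - {c}) w y}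
              \<and> separator H {c} \<and> w \<in> verts H - {c}"
proof -
  let ?V = "verts H"
  have fin: "finite ?V" using wf unfolding wf_graph_def by blast
  obtain S K where SK: "(S, K) \<in> P0sep H" "w \<in> K"
    using w unfolding verts_bot_def by blast
  have P: "min_separator H S" "component_of H S K" using SK(1) unfolding P0sep_def Psep_def by blast+
  have sepS: "separator H S" using P(1) unfolding min_separator_def by blast
  obtain x y where xy: "x \<in> ?V - S" "y \<in> ?V - S" "\<not> reach_in H (?V - S) x y"
    using sepS unfolding separator_def by blast
  have xney: "x \<noteq> y"
  proof
    assume "x = y" thus False using xy(3) reach_refl[OF xy(1), of H] by simp
  qed
  obtain s0 where s0: "s0 \<in> S" using sep_nonempty[OF con sepS] by blast
  have s0V: "s0 \<in> ?V" using s0 sepS unfolding separator_def by blast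
  have "s0 \<noteq> x" "s0 \<noteq> y" using xy s0 by auto
  hence "card {s0, x, y} = 3" using xney by simp
  moreover have "card {s0, x, y} \<le> card ?V" using fin s0V xy by (intro card_mono) auto
  ultimately have c3: "card ?V > 2" by simp
  then obtain u where u: "u \<in> ?V" "\<not> connected_set H (?V - {u})"
    using n2 unfolding two_connected_def by blast
  have "?V - {u} \<noteq> {}" using xy xney by blast
  then obtain a b where ab: "a \<in> ?V - {u}" "b \<in> ?V - {u}" "\<not> reach_in H (?V - {u}) a b"
    using u(2) unfolding connected_set_def by blast
  have sepu: "separator H {u}" unfolding separator_def using u(1) ab by blast
  obtain c where c: "S = {c}" using min_sep_single[OF wf con P(1) sepu] by blast
  obtain x1 where x1: "x1 \<in> ?V - {c}" "K = {y. reach_in H (?V - {c}) x1 y}"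
    using P(2) c unfolding component_of_def by blast
  have rx1w: "reach_in H (?V - {c}) x1 w" using SK(2) x1(2) by blast
  have wc: "w \<in> ?V - {c}" by (rule reach_mem[OF rx1w])
  have "K = {y. reach_in H (?V - {c}) w y}"
  proof
    show "K \<subseteq> {y. reach_in H (?V - {c}) w y}"
    proof
      fix z assume "z \<in> K"
      hence "reach_in H (?V - {c}) x1 z" using x1(2) by blast
      hence "reach_in H (?V - {c}) w z" by (rule reach_trans[OF reach_sym[OF wf rx1w]])
      thus "z \<in> {y. reach_in H (?V - {c}) w y}" by blast
    qed
  next
    show "{y. reach_in H (?V - {c}) w y} \<subseteq> K"
    proof
      fix z assume "z \<in> {y. reach_in H (?V - {c}) w y}"
      hence "reach_in H (?V - {c}) w z" by blast
      hence "reach_in H (?V - {c}) x1 z" by (rule reach_trans[OF rx1w])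
      thus "z \<in> K" using x1(2) by blast
    qed
  qed
  thus ?thesis using SK(1) c sepS wc by blast
qed

theorem lemma8:
  fixes G :: "('a, 'c) cgraph" and H :: "('b, 'c) cgraph" and k :: nat
  assumes "k \<ge> 2"
    and "wf_graph G" and "wf_graph H"
    and "connected G" and "connected H"
    and "\<not> two_connected G" and "\<not> two_connected H"
    and "v \<in> verts_bot G"
    and "w \<in> verts H - verts_bot H"
  shows "wl_vertex G k v \<noteq> wl_vertex H k w"
proof
  assume eq: "wl_vertex G k v = wl_vertex H k w"
  note k = assms(1) and wf = assms(2,3) and con = assms(4,5)
  have fin: "finite (verts G)" "finite (verts H)" using wf unfolding wf_graph_def by blast+
  let ?rv = "replicate k v" and ?rw = "replicate k w"
  have R: "Req G H k ?rv ?rw" unfolding Req_def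
  proof
    fix r show "wl_round G k r ?rv = wl_round H k r ?rw"
      using fun_cong[OF eq, of r] unfolding wl_vertex_def wl_stable_def by simp
  qed
  have vV: "v \<in> verts G" using assms(8) unfolding verts_bot_def by blast
  have wV: "w \<in> verts H" using assms(9) by blast
  have gv: "good G k ?rv" using vV unfolding good_def by auto
  have gw: "good H k ?rw" using wV unfolding good_def by auto
  obtain c K where cK: "({c}, K) \<in> P0sep H" "K = {y. reach_in H (verts H - {c}) w y}"
    "separator H {c}" "w \<in> verts H - {c}"
    using H_side[OF wf(2) con(2) assms(7,9)] by blast
  have nocut: "\<not> separator H {d}" if "d \<in> K" for d
    using H_nocut[OF wf(2) con(2) cK(1,2,3) that] by blast
  obtain g where gb: "bij_betw g (verts G) (verts H)" and
    g: "\<forall>z\<in>verts G. \<forall>i<k. Req G H k (?rv[i:=z]) (?rw[i:=g z])"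
    using Req_bij[OF R fin] by blast
  have cV: "c \<in> verts H" using cK(3) unfolding separator_def by blast
  have "c \<in> g ` verts G" using cV bij_betw_imp_surj_on[OF gb] by simp
  then obtain c' where c': "c' \<in> verts G" "g c' = c" by blast
  have R1: "Req G H k (?rv[1:=c']) (?rw[1:=c])" using g c' k by auto
  have gv1: "good G k (?rv[1:=c'])" by (rule good_upd[OF gv c'(1)])
  have gw1: "good H k (?rw[1:=c])" by (rule good_upd[OF gw cV])
  have "((?rv[1:=c'])!0 = (?rv[1:=c'])!1) = ((?rw[1:=c])!0 = (?rw[1:=c])!1)"
    using Req_atomic[OF R1, of 0 1] k by auto
  moreover have "(?rv[1:=c'])!0 = v" "(?rv[1:=c'])!1 = c'" "(?rw[1:=c])!0 = w" "(?rw[1:=c])!1 = c"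
    using k by auto
  ultimately have vc: "v \<noteq> c'" using cK(4) by auto
  have "separator H {(?rw[1:=c])!1}" using cK(3) k by simp
  hence sepc': "separator G {c'}"
    using cut_transfer[OF wf(2,1) k gw1 gv1 Req_sym[OF R1]] k by simp
  have vc2: "v \<in> verts G - {c'}" using vV vc by blast
  obtain d where d: "reach_in G (verts G - {c'}) v d" "separator G {d}"
    using G_side[OF wf(1) con(1) sepc' vc2 assms(8)] by blast
  obtain f where f: "\<forall>y\<in>verts G. Req G H k ((?rv[1:=c'])[1:=y]) ((?rw[1:=c])[1:=f y]) \<and>
     Req G H k ((?rv[1:=c'])[0:=y]) ((?rw[1:=c])[0:=f y]) \<and>
     (reach_in G (verts G - {(?rv[1:=c'])!1}) ((?rv[1:=c'])!0) y \<longleftrightarrow>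
      reach_in H (verts H - {(?rw[1:=c])!1}) ((?rw[1:=c])!0) (f y))"
    and fb: "bij_betw f (verts G) (verts H)"
    using Comp[OF wf k gv1 gw1 R1] by blast
  have dV: "d \<in> verts G" using reach_mem[OF d(1)] by blast
  have fd: "Req G H k ((?rv[1:=c'])[1:=d]) ((?rw[1:=c])[1:=f d])"
    "(reach_in G (verts G - {(?rv[1:=c'])!1}) ((?rv[1:=c'])!0) d \<longleftrightarrow>
      reach_in H (verts H - {(?rw[1:=c])!1}) ((?rw[1:=c])!0) (f d))"
    using bspec[OF f dV] by auto
  have "reach_in H (verts H - {c}) w (f d)" using fd(2) d(1) k by simp
  hence fdK: "f d \<in> K" using cK(2) by blast
  have R2: "Req G H k (?rv[1:=d]) (?rw[1:=f d])" using fd(1) by simp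
  have fdV: "f d \<in> verts H" using bij_betw_apply[OF fb dV] .
  have "separator G {(?rv[1:=d])!1}" using d(2) k by simp
  hence "separator H {(?rw[1:=f d])!1}"
    by (rule cut_transfer[OF wf k good_upd[OF gv dV] good_upd[OF gw fdV] R2])
  hence "separator H {f d}" using k by simp
  thus False using nocut[OF fdK] by blast
qed

end
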